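(* Let $\mathcal{C}_1$ be an arbitrary $(n_1,k_1)$ systematic binary linear code with generator matrix $\boldsymbol{G}$ (a $k_1\times n_1$ matrix over $\mathbb{F}_2$), and let $\mathcal{S}_\nu$ be the length-$\nu$ systematic single parity-check code. Let $\mathcal{C}$ be the product code consisting of all $\nu\times n_1$ binary arrays whose rows are codewords of $\mathcal{C}_1$ and whose columns are codewords of $\mathcal{S}_\nu$ (i.e., have even Hamming weight). Then the weight enumerator function of $\mathcal{C}$ is $$A_{\mathcal{C}}(z) = 2^{-k_1}\sum_{\boldsymbol{v}\in\{0,1\}^{k_1}}\left(\sum_{\boldsymbol{u}\in\{0,1\}^{k_1}}(-1)^{\boldsymbol{u}\cdot\boldsymbol{v}^{\mathrm{T}}} z^{w_{\mathrm{H}}(\boldsymbol{u}\boldsymbol{G})}\right)^{\nu}.$$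
   Context: $w_{\mathrm{H}}(\cdot)$ denotes Hamming weight; $\boldsymbol{u}\boldsymbol{G}$ is computed over $\mathbb{F}_2$; $\boldsymbol{u}\cdot\boldsymbol{v}^{\mathrm{T}}=\sum_i u_iv_i$ (only its parity matters). The weight enumerator function of a binary code $\mathcal{C}$ of length $N$ is $A_{\mathcal{C}}(z) = \sum_{i=0}^{N} A_i z^i$, where $A_i$ is the number of codewords of Hamming weight $i$. *)

theory Defs
  imports Complex_Main
begin

text \<open>Binary vectors of length m are functions nat => bool that vanish outside {0..<m}.
  Binary matrices (generator matrix, arrays) are nat => nat => bool, only the entries
  in range matter.\<close>

definition bvecs :: "nat \<Rightarrow> (nat \<Rightarrow> bool) set" where
  "bvecs m = {u. \<forall>i. m \<le> i \<longrightarrow> \<not> u i}"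

definition hamming_weight :: "nat \<Rightarrow> (nat \<Rightarrow> bool) \<Rightarrow> nat" where
  "hamming_weight m x = card {j. j < m \<and> x j}"

text \<open>Parity-relevant inner product u . v^T over the first k coordinates.\<close>
definition dotp :: "nat \<Rightarrow> (nat \<Rightarrow> bool) \<Rightarrow> (nat \<Rightarrow> bool) \<Rightarrow> nat" where
  "dotp k u v = card {i. i < k \<and> u i \<and> v i}"

definition encode :: "nat \<Rightarrow> nat \<Rightarrow> (nat \<Rightarrow> nat \<Rightarrow> bool) \<Rightarrow> (nat \<Rightarrow> bool) \<Rightarrow> (nat \<Rightarrow> bool)" where
  "encode k n G u = (\<lambda>j. j < n \<and> odd (card {i. i < k \<and> u i \<and> G i j}))"

definition lin_code :: "nat \<Rightarrow> nat \<Rightarrow> (nat \<Rightarrow> nat \<Rightarrow> bool) \<Rightarrow> (nat \<Rightarrow> bool) set" where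
  "lin_code k n G = encode k n G ` bvecs k"

definition systematic :: "nat \<Rightarrow> nat \<Rightarrow> (nat \<Rightarrow> nat \<Rightarrow> bool) \<Rightarrow> bool" where
  "systematic k n G \<longleftrightarrow> k \<le> n \<and> (\<forall>i<k. \<forall>j<k. G i j = (i = j))"

definition spc_code :: "nat \<Rightarrow> (nat \<Rightarrow> bool) set" where
  "spc_code nu = {c \<in> bvecs nu. even (hamming_weight nu c)}"

definition product_code :: "nat \<Rightarrow> nat \<Rightarrow> (nat \<Rightarrow> bool) set \<Rightarrow> (nat \<Rightarrow> nat \<Rightarrow> bool) set" where
  "product_code nu n C1 = {X. (\<forall>r j. \<not> (r < nu \<and> j < n) \<longrightarrow> \<not> X r j)
       \<and> (\<forall>r<nu. (\<lambda>j. X r j) \<in> C1)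
       \<and> (\<forall>j<n. (\<lambda>r. X r j) \<in> spc_code nu)}"

definition array_weight :: "nat \<Rightarrow> nat \<Rightarrow> (nat \<Rightarrow> nat \<Rightarrow> bool) \<Rightarrow> nat" where
  "array_weight nu n X = card {(r, j). r < nu \<and> j < n \<and> X r j}"

definition array_weight_enum :: "nat \<Rightarrow> nat \<Rightarrow> (nat \<Rightarrow> nat \<Rightarrow> bool) set \<Rightarrow> real \<Rightarrow> real" where
  "array_weight_enum nu n C z =
     (\<Sum>i = 0..nu * n. real (card {X \<in> C. array_weight nu n X = i}) * z ^ i)"

end

theory Submission
  imports Defs
begin

definition xorv :: "(nat \<Rightarrow> bool) \<Rightarrow> (nat \<Rightarrow> bool) \<Rightarrow> nat \<Rightarrow> bool" where
  "xorv a b = (\<lambda>i. a i \<noteq> b i)"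

lemma bvecs_image: "bvecs k = (\<lambda>S i. i \<in> S) ` Pow {..<k}"
proof
  show "bvecs k \<subseteq> (\<lambda>S i. i \<in> S) ` Pow {..<k}"
  proof
    fix u assume u: "u \<in> bvecs k"
    have "u = (\<lambda>i. i \<in> {i. u i})" by simp
    moreover have "{i. u i} \<in> Pow {..<k}" using u unfolding bvecs_def by (auto simp: not_le[symmetric])
    ultimately show "u \<in> (\<lambda>S i. i \<in> S) ` Pow {..<k}" by blast
  qed
qed (auto simp: bvecs_def)

lemma finite_bvecs: "finite (bvecs k)"
  unfolding bvecs_image by simp

lemma card_bvecs: "card (bvecs k) = 2 ^ k"
proof -
  have "inj_on (\<lambda>S i. i \<in> S) (Pow {..<k})"
    by (auto simp: inj_on_def fun_eq_iff)
  then show ?thesis unfolding bvecs_image by (simp add: card_image card_Pow)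
qed

lemma even_card_symdiff:
  assumes "finite A" "finite B"
  shows "even (card ((A - B) \<union> (B - A))) \<longleftrightarrow> (even (card A) \<longleftrightarrow> even (card B))"
proof -
  have 1: "card ((A - B) \<union> (B - A)) = card (A - B) + card (B - A)"
    using assms by (intro card_Un_disjoint) auto
  have "A = (A - B) \<union> (A \<inter> B)" by auto
  then have 2: "card A = card (A - B) + card (A \<inter> B)"
    using assms by (metis card_Un_disjoint finite_Diff finite_Int Diff_disjoint Int_Diff_disjoint Int_commute inf_sup_aci(1))
  have "B = (B - A) \<union> (A \<inter> B)" by auto
  then have 3: "card B = card (B - A) + card (A \<inter> B)"
    using assms by (metis card_Un_disjoint finite_Diff finite_Int Diff_disjoint Int_Diff_disjoint Int_commute inf_sup_aci(1))
  show ?thesis unfolding 1 2 3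
    by (cases "even (card (A - B))"; cases "even (card (B - A))"; cases "even (card (A \<inter> B))"; simp add: even_add)
qed

lemma parity_xor:
  "even (card {i. i < (k::nat) \<and> (a i \<noteq> b i) \<and> c i}) \<longleftrightarrow>
   (even (card {i. i < k \<and> a i \<and> c i}) \<longleftrightarrow> even (card {i. i < k \<and> b i \<and> c i}))"
proof -
  let ?A = "{i. i < k \<and> a i \<and> c i}" and ?B = "{i. i < k \<and> b i \<and> c i}"
  have "{i. i < k \<and> (a i \<noteq> b i) \<and> c i} = (?A - ?B) \<union> (?B - ?A)" by auto
  moreover have "finite ?A" by (rule finite_subset[of _ "{..<k}"]) auto
  moreover have "finite ?B" by (rule finite_subset[of _ "{..<k}"]) auto
  ultimately show ?thesis using even_card_symdiff[of ?A ?B] by (simp only:)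
qed

lemma dotp_sym: "dotp k u v = dotp k v u"
proof -
  have "{i. i < k \<and> u i \<and> v i} = {i. i < k \<and> v i \<and> u i}" by blast
  then show ?thesis unfolding dotp_def by simp
qed

lemma neg1_xor: "(-1::real) ^ dotp k (xorv s u) v = (-1) ^ dotp k s v * (-1) ^ dotp k u v"
proof -
  have "even (dotp k (xorv s u) v) \<longleftrightarrow> (even (dotp k s v) \<longleftrightarrow> even (dotp k u v))"
    unfolding dotp_def xorv_def using parity_xor[of k s u v] by simp
  then show ?thesis
    by (cases "even (dotp k s v)"; cases "even (dotp k u v)") auto
qed

lemma xorv_xorv: "xorv (xorv v e) e = v"
  by (auto simp: xorv_def fun_eq_iff)

lemma xorv_bvecs: "s \<in> bvecs k \<Longrightarrow> u \<in> bvecs k \<Longrightarrow> xorv s u \<in> bvecs k"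
  by (auto simp: bvecs_def xorv_def)

lemma orth:
  assumes s: "s \<in> bvecs k"
  shows "(\<Sum>v\<in>bvecs k. (-1::real) ^ dotp k s v) = (if \<forall>i. \<not> s i then 2 ^ k else 0)"
proof (cases "\<forall>i. \<not> s i")
  case True
  then have "\<And>v. dotp k s v = 0" unfolding dotp_def by simp
  then show ?thesis using True by (simp add: card_bvecs)
next
  case False
  then obtain i0 where i0: "s i0" by auto
  with s have ik: "i0 < k" unfolding bvecs_def by (auto simp: not_less[symmetric])
  define e where "e = (\<lambda>i::nat. i = i0)"
  have eb: "e \<in> bvecs k" using ik by (auto simp: bvecs_def e_def)
  have de: "dotp k e s = 1"
  proof -
    have "{i. i < k \<and> e i \<and> s i} = {i0}" using ik i0 by (auto simp: e_def)
    then show ?thesis by (simp add: dotp_def)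
  qed
  let ?f = "\<lambda>v. (-1::real) ^ dotp k s v"
  have "(\<Sum>v\<in>bvecs k. ?f v) = (\<Sum>v\<in>bvecs k. ?f (xorv v e))"
    by (rule sum.reindex_bij_witness[where i="\<lambda>v. xorv v e" and j="\<lambda>v. xorv v e"])
       (auto simp: xorv_xorv xorv_bvecs[OF _ eb])
  also have "\<dots> = (\<Sum>v\<in>bvecs k. - ?f v)"
  proof (rule sum.cong)
    fix v
    have "?f (xorv v e) = (-1) ^ dotp k (xorv v e) s" by (simp add: dotp_sym)
    also have "\<dots> = (-1) ^ dotp k v s * (-1) ^ dotp k e s" by (rule neg1_xor)
    also have "\<dots> = - ?f v" by (simp add: de dotp_sym)
    finally show "?f (xorv v e) = - ?f v" .
  qed simp
  also have "\<dots> = - (\<Sum>v\<in>bvecs k. ?f v)" by (simp add: sum_negf)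
  finally show ?thesis using False by simp
qed


lemma enc_bvecs: "encode k n G u \<in> bvecs n"
  by (auto simp: encode_def bvecs_def)

lemma enc_xor: "encode k n G (xorv s u) = xorv (encode k n G s) (encode k n G u)"
proof
  fix j
  show "encode k n G (xorv s u) j = xorv (encode k n G s) (encode k n G u) j"
    using parity_xor[of k s u "\<lambda>i. G i j"] unfolding encode_def xorv_def by auto
qed

lemma enc_sys:
  assumes "systematic k n G" "u \<in> bvecs k" "j < k"
  shows "encode k n G u j = u j"
proof -
  have jn: "j < n" using assms unfolding systematic_def by auto
  have "{i. i < k \<and> u i \<and> G i j} = (if u j then {j} else {})"
    using assms unfolding systematic_def by auto
  then show ?thesis using jn unfolding encode_def by auto
qed

lemma enc_inj:
  assumes "systematic k n G"
  shows "inj_on (encode k n G) (bvecs k)"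
proof (rule inj_onI)
  fix u v assume u: "u \<in> bvecs k" and v: "v \<in> bvecs k" and e: "encode k n G u = encode k n G v"
  show "u = v"
  proof
    fix i show "u i = v i"
    proof (cases "i < k")
      case True
      then show ?thesis using enc_sys[OF assms u True] enc_sys[OF assms v True] e by simp
    next
      case False
      then show ?thesis using u v unfolding bvecs_def by auto
    qed
  qed
qed

lemma enc_zero: "encode k n G (\<lambda>_. False) = (\<lambda>_. False)"
  by (auto simp: encode_def fun_eq_iff)

lemma enc_zero_iff:
  assumes "systematic k n G" "s \<in> bvecs k"
  shows "(\<forall>j<n. \<not> encode k n G s j) \<longleftrightarrow> (\<forall>i. \<not> s i)"
proof
  assume h: "\<forall>j<n. \<not> encode k n G s j"
  show "\<forall>i. \<not> s i"
  proof
    fix i show "\<not> s i"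
    proof (cases "i < k")
      case True
      then have "i < n" using assms unfolding systematic_def by auto
      then show ?thesis using h enc_sys[OF assms True] by auto
    next
      case False then show ?thesis using assms(2) unfolding bvecs_def by auto
    qed
  qed
next
  assume "\<forall>i. \<not> s i"
  then have "s = (\<lambda>_. False)" by auto
  then show "\<forall>j<n. \<not> encode k n G s j" by (simp add: enc_zero)
qed

definition PC :: "nat \<Rightarrow> nat \<Rightarrow> (nat \<Rightarrow> bool) set \<Rightarrow> (nat \<Rightarrow> bool) \<Rightarrow> (nat \<Rightarrow> nat \<Rightarrow> bool) set" where
  "PC m n C1 w = {X. (\<forall>r j. \<not> (r < m \<and> j < n) \<longrightarrow> \<not> X r j) \<and> (\<forall>r<m. X r \<in> C1)
      \<and> (\<forall>j<n. odd (card {r. r < m \<and> X r j}) = w j)}"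

lemma finite_arrays: "finite {X :: nat \<Rightarrow> nat \<Rightarrow> bool. \<forall>r j. \<not> (r < m \<and> j < n) \<longrightarrow> \<not> X r j}"
proof -
  have "{X :: nat \<Rightarrow> nat \<Rightarrow> bool. \<forall>r j. \<not> (r < m \<and> j < n) \<longrightarrow> \<not> X r j}
      \<subseteq> (\<lambda>S r j. (r, j) \<in> S) ` Pow ({..<m} \<times> {..<n})"
  proof
    fix X :: "nat \<Rightarrow> nat \<Rightarrow> bool"
    assume X: "X \<in> {X. \<forall>r j. \<not> (r < m \<and> j < n) \<longrightarrow> \<not> X r j}"
    have "X = (\<lambda>r j. (r, j) \<in> {(r, j). X r j})" by simp
    moreover have "{(r, j). X r j} \<in> Pow ({..<m} \<times> {..<n})" using X by auto
    ultimately show "X \<in> (\<lambda>S r j. (r, j) \<in> S) ` Pow ({..<m} \<times> {..<n})" by blast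
  qed
  then show ?thesis by (rule finite_subset) simp
qed

lemma finite_PC: "finite (PC m n C1 w)"
  by (rule finite_subset[OF _ finite_arrays[of m n]]) (auto simp: PC_def)

lemma card_Suc_rows: "card {r. r < Suc m \<and> P r} = card {r. r < m \<and> P r} + (if P m then 1 else 0)"
proof -
  have "{r. r < Suc m \<and> P r} = {r. r < m \<and> P r} \<union> (if P m then {m} else {})"
    by (auto simp: less_Suc_eq)
  moreover have "finite {r. r < m \<and> P r}" by simp
  ultimately show ?thesis by (cases "P m") auto
qed

lemma aw_Suc: "array_weight (Suc m) n X = array_weight m n X + hamming_weight n (X m)"
proof -
  have "{(r, j). r < Suc m \<and> j < n \<and> X r j} = {(r, j). r < m \<and> j < n \<and> X r j} \<union> Pair m ` {j. j < n \<and> X m j}"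
    by (auto simp: less_Suc_eq)
  moreover have "finite {(r, j). r < m \<and> j < n \<and> X r j}"
    by (rule finite_subset[of _ "{..<m} \<times> {..<n}"]) auto
  moreover have "finite {j. j < n \<and> X m j}" by simp
  moreover have "card (Pair m ` {j. j < n \<and> X m j}) = card {j. j < n \<and> X m j}"
    by (rule card_image) (auto simp: inj_on_def)
  moreover have "{(r, j). r < m \<and> j < n \<and> X r j} \<inter> Pair m ` {j. j < n \<and> X m j} = {}" by auto
  ultimately show ?thesis unfolding array_weight_def hamming_weight_def
    by (simp add: card_Un_disjoint card_image)
qed

lemma aw_upd: "array_weight m n (X(m := c)) = array_weight m n X"
  unfolding array_weight_def by (rule arg_cong[where f=card]) auto

lemma E_Suc:
  assumes C1: "C1 \<subseteq> bvecs n" "finite C1"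
  shows "(\<Sum>X\<in>PC (Suc m) n C1 w. (z::real) ^ array_weight (Suc m) n X) =
    (\<Sum>c\<in>C1. z ^ hamming_weight n c * (\<Sum>Y\<in>PC m n C1 (xorv w c). z ^ array_weight m n Y))"
proof -
  have "(\<Sum>c\<in>C1. z ^ hamming_weight n c * (\<Sum>Y\<in>PC m n C1 (xorv w c). z ^ array_weight m n Y))
      = (\<Sum>c\<in>C1. \<Sum>Y\<in>PC m n C1 (xorv w c). z ^ hamming_weight n c * z ^ array_weight m n Y)"
    by (simp add: sum_distrib_left)
  also have "\<dots> = (\<Sum>p\<in>Sigma C1 (\<lambda>c. PC m n C1 (xorv w c)). z ^ hamming_weight n (fst p) * z ^ array_weight m n (snd p))"
    by (subst sum.Sigma) (auto simp: C1 finite_PC split_beta)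
  also have "\<dots> = (\<Sum>X\<in>PC (Suc m) n C1 w. z ^ array_weight (Suc m) n X)"
  proof (rule sum.reindex_bij_witness[where i="\<lambda>X. (X m, X(m := (\<lambda>_. False)))" and j="\<lambda>p. (snd p)(m := fst p)"])
    fix p assume p: "p \<in> Sigma C1 (\<lambda>c. PC m n C1 (xorv w c))"
    obtain c Y where pcy: "p = (c, Y)" by (cases p)
    have c: "c \<in> C1" and Y: "Y \<in> PC m n C1 (xorv w c)" using p pcy by auto
    have Ym: "Y m = (\<lambda>_. False)" using Y by (auto simp: PC_def)
    show "(((snd p)(m := fst p)) m, ((snd p)(m := fst p))(m := (\<lambda>_. False))) = p"
      using Ym pcy by auto
    have cb: "\<And>j. n \<le> j \<Longrightarrow> \<not> c j" using c C1 unfolding bvecs_def by auto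
    have "\<forall>r j. \<not> (r < Suc m \<and> j < n) \<longrightarrow> \<not> (Y(m := c)) r j"
    proof (intro allI impI)
      fix r j assume rj: "\<not> (r < Suc m \<and> j < n)"
      show "\<not> (Y(m := c)) r j"
      proof (cases "r = m")
        case True then show ?thesis using rj cb by (auto simp: not_less)
      next
        case False then show ?thesis using rj Y unfolding PC_def by auto
      qed
    qed
    moreover have "\<forall>r<Suc m. (Y(m := c)) r \<in> C1"
      using Y c unfolding PC_def by (auto simp: less_Suc_eq)
    moreover have "\<forall>j<n. odd (card {r. r < Suc m \<and> (Y(m := c)) r j}) = w j"
    proof (intro allI impI)
      fix j assume j: "j < n"
      have "{r. r < m \<and> (Y(m := c)) r j} = {r. r < m \<and> Y r j}" by auto
      then have "card {r. r < Suc m \<and> (Y(m := c)) r j} = card {r. r < m \<and> Y r j} + (if c j then 1 else 0)"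
        unfolding card_Suc_rows by simp
      moreover have "odd (card {r. r < m \<and> Y r j}) = xorv w c j" using Y j unfolding PC_def by auto
      ultimately show "odd (card {r. r < Suc m \<and> (Y(m := c)) r j}) = w j"
        by (auto simp: xorv_def)
    qed
    ultimately have "Y(m := c) \<in> PC (Suc m) n C1 w" unfolding PC_def mem_Collect_eq by (intro conjI)
    then show "(snd p)(m := fst p) \<in> PC (Suc m) n C1 w" using pcy by simp
    have "array_weight (Suc m) n (Y(m := c)) = array_weight m n Y + hamming_weight n c"
      by (simp only: aw_Suc aw_upd fun_upd_same)
    then show "z ^ array_weight (Suc m) n ((snd p)(m := fst p)) = z ^ hamming_weight n (fst p) * z ^ array_weight m n (snd p)"
      using pcy by (simp add: power_add mult.commute)
  next
    fix X assume X: "X \<in> PC (Suc m) n C1 w"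
    show "(\<lambda>p. (snd p)(m := fst p)) (X m, X(m := (\<lambda>_. False))) = X" by simp
    have Xm: "X m \<in> C1" using X unfolding PC_def by auto
    have "\<forall>r j. \<not> (r < m \<and> j < n) \<longrightarrow> \<not> (X(m := (\<lambda>_. False))) r j"
      using X unfolding PC_def by auto
    moreover have "\<forall>r<m. (X(m := (\<lambda>_. False))) r \<in> C1"
      using X unfolding PC_def by auto
    moreover have "\<forall>j<n. odd (card {r. r < m \<and> (X(m := (\<lambda>_. False))) r j}) = xorv w (X m) j"
    proof (intro allI impI)
      fix j assume j: "j < n"
      have e: "{r. r < m \<and> (X(m := (\<lambda>_. False))) r j} = {r. r < m \<and> X r j}" by auto
      have "odd (card {r. r < Suc m \<and> X r j}) = w j" using X j unfolding PC_def by auto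
      then have "odd (card {r. r < m \<and> X r j} + (if X m j then 1 else 0)) = w j"
        unfolding card_Suc_rows .
      then show "odd (card {r. r < m \<and> (X(m := (\<lambda>_. False))) r j}) = xorv w (X m) j"
        unfolding e xorv_def by (cases "X m j") auto
    qed
    ultimately have "X(m := (\<lambda>_. False)) \<in> PC m n C1 (xorv w (X m))"
      unfolding PC_def mem_Collect_eq by (intro conjI)
    then show "(X m, X(m := (\<lambda>_. False))) \<in> Sigma C1 (\<lambda>c. PC m n C1 (xorv w c))" using Xm by simp
  qed
  finally show ?thesis by simp
qed


definition Fz :: "nat \<Rightarrow> nat \<Rightarrow> (nat \<Rightarrow> nat \<Rightarrow> bool) \<Rightarrow> real \<Rightarrow> (nat \<Rightarrow> bool) \<Rightarrow> real" where
  "Fz k n G z v = (\<Sum>u\<in>bvecs k. (-1) ^ dotp k u v * z ^ hamming_weight n (encode k n G u))"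

lemma PC_0: "PC 0 n C1 w = (if \<forall>j<n. \<not> w j then {\<lambda>r j. False} else {})"
  by (auto simp: PC_def fun_eq_iff)

lemma main:
  assumes sys: "systematic k n G"
  shows "\<forall>s\<in>bvecs k. (\<Sum>X\<in>PC m n (lin_code k n G) (encode k n G s). z ^ array_weight m n X)
     = (1 / 2 ^ k) * (\<Sum>v\<in>bvecs k. (-1) ^ dotp k s v * Fz k n G z v ^ m)"
proof (induction m)
  case 0
  show ?case
  proof
    fix s assume s: "s \<in> bvecs k"
    have "(\<Sum>X\<in>PC 0 n (lin_code k n G) (encode k n G s). z ^ array_weight 0 n X)
        = (if \<forall>i. \<not> s i then 1 else 0)"
      unfolding PC_0 enc_zero_iff[OF sys s] by (simp add: array_weight_def)
    also have "\<dots> = (1 / 2 ^ k) * (\<Sum>v\<in>bvecs k. (-1) ^ dotp k s v * Fz k n G z v ^ 0)"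
      using orth[OF s] by simp
    finally show "(\<Sum>X\<in>PC 0 n (lin_code k n G) (encode k n G s). z ^ array_weight 0 n X)
     = (1 / 2 ^ k) * (\<Sum>v\<in>bvecs k. (-1) ^ dotp k s v * Fz k n G z v ^ 0)" .
  qed
next
  case (Suc m)
  show ?case
  proof
    fix s assume s: "s \<in> bvecs k"
    let ?B = "bvecs k" and ?e = "encode k n G" and ?F = "Fz k n G z"
    have C1: "lin_code k n G \<subseteq> bvecs n" "finite (lin_code k n G)"
      using enc_bvecs finite_bvecs unfolding lin_code_def by auto
    have "(\<Sum>X\<in>PC (Suc m) n (lin_code k n G) (?e s). z ^ array_weight (Suc m) n X)
       = (\<Sum>c\<in>lin_code k n G. z ^ hamming_weight n c * (\<Sum>Y\<in>PC m n (lin_code k n G) (xorv (?e s) c). z ^ array_weight m n Y))"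
      by (rule E_Suc[OF C1])
    also have "\<dots> = (\<Sum>u\<in>?B. z ^ hamming_weight n (?e u) * (\<Sum>Y\<in>PC m n (lin_code k n G) (xorv (?e s) (?e u)). z ^ array_weight m n Y))"
      unfolding lin_code_def by (simp add: sum.reindex[OF enc_inj[OF sys]])
    also have "\<dots> = (\<Sum>u\<in>?B. z ^ hamming_weight n (?e u) * ((1 / 2 ^ k) * (\<Sum>v\<in>?B. (-1) ^ dotp k (xorv s u) v * ?F v ^ m)))"
    proof (rule sum.cong)
      fix u assume u: "u \<in> ?B"
      show "z ^ hamming_weight n (?e u) * (\<Sum>Y\<in>PC m n (lin_code k n G) (xorv (?e s) (?e u)). z ^ array_weight m n Y)
          = z ^ hamming_weight n (?e u) * ((1 / 2 ^ k) * (\<Sum>v\<in>?B. (-1) ^ dotp k (xorv s u) v * ?F v ^ m))"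
        using Suc.IH xorv_bvecs[OF s u] by (simp add: enc_xor[symmetric])
    qed simp
    also have "\<dots> = (\<Sum>u\<in>?B. \<Sum>v\<in>?B. (1 / 2 ^ k) * ((-1) ^ dotp k s v * ?F v ^ m) * ((-1) ^ dotp k u v * z ^ hamming_weight n (?e u)))"
      by (simp add: sum_distrib_left neg1_xor mult_ac)
    also have "\<dots> = (\<Sum>v\<in>?B. \<Sum>u\<in>?B. (1 / 2 ^ k) * ((-1) ^ dotp k s v * ?F v ^ m) * ((-1) ^ dotp k u v * z ^ hamming_weight n (?e u)))"
      by (rule sum.swap)
    also have "\<dots> = (\<Sum>v\<in>?B. (1 / 2 ^ k) * ((-1) ^ dotp k s v * ?F v ^ m) * ?F v)"
      by (simp add: Fz_def sum_distrib_left)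
    also have "\<dots> = (1 / 2 ^ k) * (\<Sum>v\<in>?B. (-1) ^ dotp k s v * ?F v ^ Suc m)"
      by (simp add: sum_distrib_left mult_ac)
    finally show "(\<Sum>X\<in>PC (Suc m) n (lin_code k n G) (?e s). z ^ array_weight (Suc m) n X)
       = (1 / 2 ^ k) * (\<Sum>v\<in>?B. (-1) ^ dotp k s v * ?F v ^ Suc m)" .
  qed
qed

lemma enum_sum:
  assumes "finite C" "\<forall>X\<in>C. array_weight m n X \<le> m * n"
  shows "array_weight_enum m n C z = (\<Sum>X\<in>C. z ^ array_weight m n X)"
proof -
  have "(\<Sum>X\<in>C. z ^ array_weight m n X) = (\<Sum>i\<in>{0..m * n}. \<Sum>X\<in>{X \<in> C. array_weight m n X = i}. z ^ array_weight m n X)"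
    using assms by (intro sum.group[symmetric]) auto
  also have "\<dots> = (\<Sum>i\<in>{0..m * n}. real (card {X \<in> C. array_weight m n X = i}) * z ^ i)"
    by (intro sum.cong refl) simp
  finally show ?thesis unfolding array_weight_enum_def by simp
qed

lemma aw_le: "array_weight m n X \<le> m * n"
proof -
  have "array_weight m n X \<le> card ({..<m} \<times> {..<n})"
    unfolding array_weight_def by (rule card_mono) auto
  then show ?thesis by (simp add: card_cartesian_product)
qed

lemma product_PC: "product_code m n C1 = PC m n C1 (\<lambda>_. False)"
  unfolding product_code_def PC_def spc_code_def bvecs_def hamming_weight_def
  by (auto simp: not_less)

theorem theorem3:
  fixes k1 n1 \<nu> :: nat and G :: "nat \<Rightarrow> nat \<Rightarrow> bool" and z :: real
  assumes "systematic k1 n1 G"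
  shows "array_weight_enum \<nu> n1 (product_code \<nu> n1 (lin_code k1 n1 G)) z =
    (1 / 2 ^ k1) * (\<Sum>v\<in>bvecs k1.
        (\<Sum>u\<in>bvecs k1. (-1) ^ dotp k1 u v * z ^ hamming_weight n1 (encode k1 n1 G u)) ^ \<nu>)"
proof -
  have z0: "(\<lambda>_. False) \<in> bvecs k1" by (simp add: bvecs_def)
  have "array_weight_enum \<nu> n1 (product_code \<nu> n1 (lin_code k1 n1 G)) z
      = (\<Sum>X\<in>PC \<nu> n1 (lin_code k1 n1 G) (encode k1 n1 G (\<lambda>_. False)). z ^ array_weight \<nu> n1 X)"
    unfolding product_PC enc_zero by (rule enum_sum) (auto simp: finite_PC aw_le)
  also have "\<dots> = (1 / 2 ^ k1) * (\<Sum>v\<in>bvecs k1. (-1) ^ dotp k1 (\<lambda>_. False) v * Fz k1 n1 G z v ^ \<nu>)"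
    using main[OF assms] z0 by blast
  also have "\<dots> = (1 / 2 ^ k1) * (\<Sum>v\<in>bvecs k1.
        (\<Sum>u\<in>bvecs k1. (-1) ^ dotp k1 u v * z ^ hamming_weight n1 (encode k1 n1 G u)) ^ \<nu>)"
    by (simp add: dotp_def Fz_def)
  finally show ?thesis .
qed

end
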